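(* Let $U$ be a commutative supertropical monoid, $M:=eU$, $\gamma:M\to N$ a surjective homomorphism onto a bipotent semiring $N$, and $\alpha:U\to V$ a transmission covering $\gamma$. Then $\alpha$ is an h-transmission if and only if the ghost kernel $\mathfrak A_\alpha$ contains the set $\Sigma_0(U,\gamma):=\{x\in\mathcal T(U):\exists x_1\in M,\ x_1<ex,\ \gamma(x_1)=\gamma(ex)\neq0\}$.
   Context: All monoids are commutative. A supertropical monoid is a monoid $(U,\cdot)$ with absorbing element $0$ and distinguished idempotent $e$ with $ex=0\Rightarrow x=0$, together with a total ordering on $M:=eU$, compatible with multiplication and with $0$ least, making $M$ a bipotent semiring (addition $=\max$). $\mathcal T(U):=U\setminus eU$. A transmission $\alpha:U\to V$ is a map with $\alpha(0)=0$, $\alpha(1)=1$, multiplicative, $\alpha(e_U)=e_V$, order-preserving on $eU$; it covers $\gamma$ if its restriction $eU\to eV$ equals $\gamma$ (so $eV=N$). Ghost kernel: $\mathfrak A_\alpha:=\{x\in U:\alpha(x)\in eV\}$. An h-transmission is a transmission such that for all $x,y\in U$: if $ex<ey$ and $\alpha(ex)=\alpha(ey)$, then $\alpha(y)\in eV$. *)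

theory Defs
  imports Main
begin

text \<open>A (commutative) supertropical monoid, given by an explicit carrier.
  The field ghost is the distinguished idempotent e; le is the total ordering
  on the ghost ideal M = eU.\<close>

record 'a stmonoid =
  carrier :: "'a set"
  mult :: "'a \<Rightarrow> 'a \<Rightarrow> 'a"
  one :: "'a"
  zero :: "'a"
  ghost :: "'a"
  le :: "'a \<Rightarrow> 'a \<Rightarrow> bool"

definition ghosts :: "('a, 'b) stmonoid_scheme \<Rightarrow> 'a set" where
  "ghosts U = mult U (ghost U) ` carrier U"

definition lt :: "('a, 'b) stmonoid_scheme \<Rightarrow> 'a \<Rightarrow> 'a \<Rightarrow> bool" where
  "lt U x y \<longleftrightarrow> le U x y \<and> x \<noteq> y"

definition gadd :: "('a, 'b) stmonoid_scheme \<Rightarrow> 'a \<Rightarrow> 'a \<Rightarrow> 'a" where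
  "gadd U x y = (if le U x y then y else x)"

definition supertropical_monoid :: "('a, 'b) stmonoid_scheme \<Rightarrow> bool" where
  "supertropical_monoid U \<longleftrightarrow>
     (\<forall>x\<in>carrier U. \<forall>y\<in>carrier U. mult U x y \<in> carrier U) \<and>
     (\<forall>x\<in>carrier U. \<forall>y\<in>carrier U. \<forall>z\<in>carrier U.
         mult U (mult U x y) z = mult U x (mult U y z)) \<and>
     (\<forall>x\<in>carrier U. \<forall>y\<in>carrier U. mult U x y = mult U y x) \<and>
     one U \<in> carrier U \<and> (\<forall>x\<in>carrier U. mult U (one U) x = x) \<and>
     zero U \<in> carrier U \<and> (\<forall>x\<in>carrier U. mult U (zero U) x = zero U) \<and>
     ghost U \<in> carrier U \<and> mult U (ghost U) (ghost U) = ghost U \<and>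
     (\<forall>x\<in>carrier U. mult U (ghost U) x = zero U \<longrightarrow> x = zero U) \<and>
     \<comment> \<open>total ordering on M = eU\<close>
     (\<forall>x\<in>ghosts U. le U x x) \<and>
     (\<forall>x\<in>ghosts U. \<forall>y\<in>ghosts U. le U x y \<and> le U y x \<longrightarrow> x = y) \<and>
     (\<forall>x\<in>ghosts U. \<forall>y\<in>ghosts U. \<forall>z\<in>ghosts U. le U x y \<and> le U y z \<longrightarrow> le U x z) \<and>
     (\<forall>x\<in>ghosts U. \<forall>y\<in>ghosts U. le U x y \<or> le U y x) \<and>
     \<comment> \<open>compatible with multiplication (so M is a bipotent semiring with addition max)\<close>
     (\<forall>x\<in>ghosts U. \<forall>y\<in>ghosts U. \<forall>z\<in>ghosts U. le U x y \<longrightarrow> le U (mult U x z) (mult U y z)) \<and>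
     \<comment> \<open>0 is the least element\<close>
     (\<forall>x\<in>ghosts U. le U (zero U) x)"

definition tangibles :: "('a, 'b) stmonoid_scheme \<Rightarrow> 'a set" where
  "tangibles U = carrier U - ghosts U"

text \<open>Semiring homomorphism of bipotent semirings eU \<rightarrow> eV (the unit of eU is e).\<close>
definition ghost_semiring_hom ::
  "('a, 'c) stmonoid_scheme \<Rightarrow> ('b, 'd) stmonoid_scheme \<Rightarrow> ('a \<Rightarrow> 'b) \<Rightarrow> bool" where
  "ghost_semiring_hom U V g \<longleftrightarrow>
     (\<forall>x\<in>ghosts U. g x \<in> ghosts V) \<and>
     g (zero U) = zero V \<and> g (ghost U) = ghost V \<and>
     (\<forall>x\<in>ghosts U. \<forall>y\<in>ghosts U. g (mult U x y) = mult V (g x) (g y)) \<and>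
     (\<forall>x\<in>ghosts U. \<forall>y\<in>ghosts U. g (gadd U x y) = gadd V (g x) (g y))"

definition transmission ::
  "('a, 'c) stmonoid_scheme \<Rightarrow> ('b, 'd) stmonoid_scheme \<Rightarrow> ('a \<Rightarrow> 'b) \<Rightarrow> bool" where
  "transmission U V \<alpha> \<longleftrightarrow>
     (\<forall>x\<in>carrier U. \<alpha> x \<in> carrier V) \<and>
     \<alpha> (zero U) = zero V \<and> \<alpha> (one U) = one V \<and>
     (\<forall>x\<in>carrier U. \<forall>y\<in>carrier U. \<alpha> (mult U x y) = mult V (\<alpha> x) (\<alpha> y)) \<and>
     \<alpha> (ghost U) = ghost V \<and>
     (\<forall>x\<in>ghosts U. \<forall>y\<in>ghosts U. le U x y \<longrightarrow> le V (\<alpha> x) (\<alpha> y))"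

text \<open>\<alpha> covers \<gamma> : eU \<rightarrow> eV (so N = eV).\<close>
definition covers ::
  "('a, 'c) stmonoid_scheme \<Rightarrow> ('a \<Rightarrow> 'b) \<Rightarrow> ('a \<Rightarrow> 'b) \<Rightarrow> bool" where
  "covers U \<alpha> \<gamma> \<longleftrightarrow> (\<forall>x\<in>ghosts U. \<alpha> x = \<gamma> x)"

definition ghost_kernel ::
  "('a, 'c) stmonoid_scheme \<Rightarrow> ('b, 'd) stmonoid_scheme \<Rightarrow> ('a \<Rightarrow> 'b) \<Rightarrow> 'a set" where
  "ghost_kernel U V \<alpha> = {x\<in>carrier U. \<alpha> x \<in> ghosts V}"

definition h_transmission ::
  "('a, 'c) stmonoid_scheme \<Rightarrow> ('b, 'd) stmonoid_scheme \<Rightarrow> ('a \<Rightarrow> 'b) \<Rightarrow> bool" where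
  "h_transmission U V \<alpha> \<longleftrightarrow> transmission U V \<alpha> \<and>
     (\<forall>x\<in>carrier U. \<forall>y\<in>carrier U.
        lt U (mult U (ghost U) x) (mult U (ghost U) y) \<and>
        \<alpha> (mult U (ghost U) x) = \<alpha> (mult U (ghost U) y) \<longrightarrow> \<alpha> y \<in> ghosts V)"

definition Sigma0 ::
  "('a, 'c) stmonoid_scheme \<Rightarrow> ('b, 'd) stmonoid_scheme \<Rightarrow> ('a \<Rightarrow> 'b) \<Rightarrow> 'a set" where
  "Sigma0 U N \<gamma> = {x\<in>tangibles U. \<exists>x1\<in>ghosts U. lt U x1 (mult U (ghost U) x) \<and>
       \<gamma> x1 = \<gamma> (mult U (ghost U) x) \<and> \<gamma> (mult U (ghost U) x) \<noteq> zero N}"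

end

theory Submission
  imports Defs
begin

lemma st_mult: "supertropical_monoid U \<Longrightarrow> x \<in> carrier U \<Longrightarrow> y \<in> carrier U \<Longrightarrow> mult U x y \<in> carrier U"
  unfolding supertropical_monoid_def by (elim conjE) meson
lemma st_assoc: "supertropical_monoid U \<Longrightarrow> x \<in> carrier U \<Longrightarrow> y \<in> carrier U \<Longrightarrow> z \<in> carrier U \<Longrightarrow> mult U (mult U x y) z = mult U x (mult U y z)"
  unfolding supertropical_monoid_def by (elim conjE) meson
lemma st_comm: "supertropical_monoid U \<Longrightarrow> x \<in> carrier U \<Longrightarrow> y \<in> carrier U \<Longrightarrow> mult U x y = mult U y x"
  unfolding supertropical_monoid_def by (elim conjE) meson
lemma st_zero: "supertropical_monoid U \<Longrightarrow> zero U \<in> carrier U"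
  unfolding supertropical_monoid_def by (elim conjE) meson
lemma st_zmult: "supertropical_monoid U \<Longrightarrow> x \<in> carrier U \<Longrightarrow> mult U (zero U) x = zero U"
  unfolding supertropical_monoid_def by (elim conjE) meson
lemma st_ghost: "supertropical_monoid U \<Longrightarrow> ghost U \<in> carrier U"
  unfolding supertropical_monoid_def by (elim conjE) meson
lemma st_idem: "supertropical_monoid U \<Longrightarrow> mult U (ghost U) (ghost U) = ghost U"
  unfolding supertropical_monoid_def by (elim conjE) meson
lemma st_nz: "supertropical_monoid U \<Longrightarrow> x \<in> carrier U \<Longrightarrow> mult U (ghost U) x = zero U \<Longrightarrow> x = zero U"
  unfolding supertropical_monoid_def by (elim conjE) meson

theorem proposition5p8:
  fixes U :: "'a stmonoid" and V :: "'b stmonoid"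
    and \<gamma> :: "'a \<Rightarrow> 'b" and \<alpha> :: "'a \<Rightarrow> 'b"
  assumes "supertropical_monoid U"
    and "supertropical_monoid V"
    and "ghost_semiring_hom U V \<gamma>"
    and "\<gamma> ` ghosts U = ghosts V"
    and "transmission U V \<alpha>"
    and "covers U \<alpha> \<gamma>"
  shows "h_transmission U V \<alpha> \<longleftrightarrow> Sigma0 U V \<gamma> \<subseteq> ghost_kernel U V \<alpha>"
proof
  have U: "supertropical_monoid U" using assms(1) .
  have T: "transmission U V \<alpha>" using assms(5) .
  have ee: "\<And>z. z \<in> ghosts U \<Longrightarrow> mult U (ghost U) z = z"
  proof -
    fix z assume "z \<in> ghosts U"
    then obtain u where u: "u \<in> carrier U" "z = mult U (ghost U) u" unfolding ghosts_def by auto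
    show "mult U (ghost U) z = z" using u st_assoc[OF U st_ghost[OF U] st_ghost[OF U] u(1)] st_idem[OF U] by simp
  qed
  have eg: "\<And>z. z \<in> carrier U \<Longrightarrow> mult U (ghost U) z \<in> ghosts U"
    unfolding ghosts_def by auto
  {
    assume H: "h_transmission U V \<alpha>"
    show "Sigma0 U V \<gamma> \<subseteq> ghost_kernel U V \<alpha>"
    proof
      fix x assume "x \<in> Sigma0 U V \<gamma>"
      then obtain x1 where x: "x \<in> carrier U" "x1 \<in> ghosts U"
        "lt U x1 (mult U (ghost U) x)" "\<gamma> x1 = \<gamma> (mult U (ghost U) x)"
        unfolding Sigma0_def tangibles_def by auto
      have x1c: "x1 \<in> carrier U" using x(2) st_mult[OF U st_ghost[OF U]] unfolding ghosts_def by auto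
      have "\<alpha> (mult U (ghost U) x1) = \<alpha> (mult U (ghost U) x)"
        using x ee[OF x(2)] assms(6) eg[OF x(1)] unfolding covers_def by simp
      moreover have "lt U (mult U (ghost U) x1) (mult U (ghost U) x)" using x ee by simp
      ultimately have "\<alpha> x \<in> ghosts V" using H x1c x(1) unfolding h_transmission_def by blast
      then show "x \<in> ghost_kernel U V \<alpha>" using x(1) unfolding ghost_kernel_def by auto
    qed
  }
  {
    assume S: "Sigma0 U V \<gamma> \<subseteq> ghost_kernel U V \<alpha>"
    show "h_transmission U V \<alpha>"
      unfolding h_transmission_def
    proof (intro conjI T ballI impI)
      fix x y assume xy: "x \<in> carrier U" "y \<in> carrier U"
        and L: "lt U (mult U (ghost U) x) (mult U (ghost U) y) \<and>
          \<alpha> (mult U (ghost U) x) = \<alpha> (mult U (ghost U) y)"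
      have cov: "\<And>z. z \<in> ghosts U \<Longrightarrow> \<alpha> z = \<gamma> z" using assms(6) unfolding covers_def by auto
      show "\<alpha> y \<in> ghosts V"
      proof (cases "y \<in> ghosts U")
        case True
        then show ?thesis using cov assms(3) unfolding ghost_semiring_hom_def by auto
      next
        case False
        show ?thesis
        proof (cases "\<gamma> (mult U (ghost U) y) = zero V")
          case False2: False
          have "y \<in> Sigma0 U V \<gamma>" unfolding Sigma0_def tangibles_def
            using False False2 xy L eg cov by auto
          then show ?thesis using S unfolding ghost_kernel_def by auto
        next
          case True
          have "\<alpha> (mult U (ghost U) y) = mult V (ghost V) (\<alpha> y)"
            using T xy st_ghost[OF U] unfolding transmission_def by auto
          moreover have "\<alpha> (mult U (ghost U) y) = zero V" using True cov eg xy by auto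
          moreover have "\<alpha> y \<in> carrier V" using T xy unfolding transmission_def by auto
          ultimately have z: "\<alpha> y = zero V" using st_nz[OF assms(2)] by auto
          have "mult V (ghost V) (zero V) = zero V"
            using st_comm[OF assms(2) st_ghost[OF assms(2)] st_zero[OF assms(2)]] st_zmult[OF assms(2) st_ghost[OF assms(2)]] by simp
          moreover have "zero V \<in> carrier V" using st_zero[OF assms(2)] .
          ultimately have "zero V \<in> ghosts V" unfolding ghosts_def by (metis image_eqI)
          then show ?thesis using z by simp
        qed
      qed
    qed
  }
qed

end
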